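(* Let $\beta_{ij}$ ($i\neq j$, $i,j=1,\dots,N$) be smooth functions of $\boldsymbol u=(u_1,\dots,u_N)$ satisfying the Lamé equations $$\frac{\partial\beta_{ij}}{\partial u_k}=\beta_{ik}\beta_{kj}\ (i,j,k \text{ distinct}),\qquad \frac{\partial\beta_{ij}}{\partial u_i}+\frac{\partial\beta_{ji}}{\partial u_j}+\sum_{k\neq i,j}\beta_{ki}\beta_{kj}=0\ (i\neq j).$$ Let $\boldsymbol\xi_i$ ($\mathbb R^M$-valued) and $\boldsymbol\zeta_i$ ($\mathbb R^L$-valued) satisfy $\frac{\partial\boldsymbol\xi_j}{\partial u_i}=\beta_{ji}\boldsymbol\xi_i$, $\frac{\partial\boldsymbol\zeta_j}{\partial u_i}=\beta_{ji}\boldsymbol\zeta_i$ for $i\neq j$, and set $\boldsymbol\xi^*_i=\big(\frac{\partial\boldsymbol\xi_i}{\partial u_i}+\sum_{k\neq i}\boldsymbol\xi_k\beta_{ki}\big)^{T}$, $\boldsymbol\zeta^*_i=\big(\frac{\partial\boldsymbol\zeta_i}{\partial u_i}+\sum_{k\neq i}\boldsymbol\zeta_k\beta_{ki}\big)^{T}$. Let $\Omega(\boldsymbol\xi,\boldsymbol\xi^* )$ ($M\times M$), $\Omega(\boldsymbol\xi,\boldsymbol\zeta^* )$ ($M\times L$), $\Omega(\boldsymbol\zeta,\boldsymbol\xi^* )$ ($L\times M$) be matrix functions with $\partial_{u_i}\Omega(\boldsymbol a,\boldsymbol b^* )=\boldsymbol a_i\boldsymbol b^*_i$ for all $i$ (for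 each of the three pairs $(\boldsymbol a,\boldsymbol b)$), such that $\Omega(\boldsymbol\xi,\boldsymbol\xi^* )$ is invertible and $$\Omega(\boldsymbol\xi,\boldsymbol\zeta^* )+\Omega(\boldsymbol\zeta,\boldsymbol\xi^* )^{T}=\sum_{k=1}^N\boldsymbol\xi_k\boldsymbol\zeta_k^{T},\qquad \Omega(\boldsymbol\xi,\boldsymbol\xi^* )+\Omega(\boldsymbol\xi,\boldsymbol\xi^* )^{T}=\sum_{k=1}^N\boldsymbol\xi_k\boldsymbol\xi_k^{T}.$$ Define $$\hat\beta_{ij}=\beta_{ij}-\boldsymbol\xi^*_j\,\Omega(\boldsymbol\xi,\boldsymbol\xi^* )^{-1}\boldsymbol\xi_i,\quad \hat{\boldsymbol\zeta}_i=\boldsymbol\zeta_i-\Omega(\boldsymbol\zeta,\boldsymbol\xi^* )\Omega(\boldsymbol\xi,\boldsymbol\xi^* )^{-1}\boldsymbol\xi_i,\quad \hat{\boldsymbol\zeta}^*_i=\boldsymbol\zeta^*_i-\boldsymbol\xi^*_i\,\Omega(\boldsymbol\xi,\boldsymbol\xi^* )^{-1}\Omega(\boldsymbol\xi,\boldsymbol\zeta^* ).$$ Then for every $i=1,\dots,N$, $$\hat{\boldsymbol\zeta}^*_i=\Big(\frac{\partial\hat{\boldsymbol\zeta}_i}{\partial u_i}+\sum_{k\neq i}\hat{\boldsymbol\zeta}_k\hat\beta_{ki}\Big)^{T}.$$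
   Context: Vectors are columns, starred quantities are row vectors, ${}^T$ is transpose, and $\boldsymbol a_i\boldsymbol b^*_i$ is the outer (column times row) product. All functions are smooth on an open domain of $\mathbb R^N$. *)

theory Defs
  imports "HOL-Analysis.Analysis"
begin

definition pd :: "(real^'n \<Rightarrow> 'a::real_normed_vector) \<Rightarrow> 'n \<Rightarrow> real^'n \<Rightarrow> 'a" where
  "pd f i u = frechet_derivative f (at u) (axis i 1)"

fun Ck :: "nat \<Rightarrow> (real^'n) set \<Rightarrow> (real^'n \<Rightarrow> 'a::real_normed_vector) \<Rightarrow> bool" where
  "Ck 0 U f = continuous_on U f"
| "Ck (Suc k) U f = (f differentiable_on U \<and> (\<forall>i. Ck k U (pd f i)))"

definition smooth_on :: "(real^'n) set \<Rightarrow> (real^'n \<Rightarrow> 'a::real_normed_vector) \<Rightarrow> bool" where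
  "smooth_on U f = (\<forall>k. Ck k U f)"

definition outer :: "real^'r \<Rightarrow> real^'c \<Rightarrow> real^'c^'r" where
  "outer a b = (\<chi> r c. a $ r * b $ c)"

text \<open>The starred quantity a^*_i, stored as a column vector (i.e. its transpose):
  a^*_i = (d a_i / d u_i + sum_{k ~= i} a_k beta_{ki})^T.\<close>
definition starv :: "('n \<Rightarrow> 'n \<Rightarrow> real^'n \<Rightarrow> real) \<Rightarrow> ('n \<Rightarrow> real^'n \<Rightarrow> real^'m)
    \<Rightarrow> 'n \<Rightarrow> real^'n \<Rightarrow> real^'m" where
  "starv \<beta> a i u = pd (a i) i u + (\<Sum>k\<in>UNIV - {i}. \<beta> k i u *\<^sub>R a k u)"

end

theory Submission imports Defs begin
lemma pd_eq: "(f has_derivative f') (at u) \<Longrightarrow> pd f i u = f' (axis i 1)"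
  unfolding pd_def using frechet_derivative_at by metis

lemma smooth_diff: "smooth_on U f \<Longrightarrow> open U \<Longrightarrow> u \<in> U \<Longrightarrow> f differentiable (at u)"
proof -
  assume "smooth_on U f" "open U" "u \<in> U"
  then have "Ck (Suc 0) U f" unfolding smooth_on_def by blast
  then have "f differentiable_on U" by simp
  then show ?thesis using \<open>open U\<close> \<open>u \<in> U\<close> differentiable_on_eq_differentiable_at by blast
qed

lemma bilinear_mv: "bounded_bilinear (\<lambda>(A::real^'m^'l) (x::real^'m). A *v x)"
  unfolding bilinear_conv_bounded_bilinear[symmetric] bilinear_def
  by (auto intro!: linearI simp: matrix_vector_right_distrib matrix_vector_mult_add_rdistrib
      matrix_vector_mult_scaleR matrix_vector_mul_linear scaleR_matrix_vector_assoc)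

lemma mv_sum: "A *v (sum f S) = (\<Sum>k\<in>S. A *v f k)"
  by (induction S rule: infinite_finite_induct) (simp_all add: matrix_vector_right_distrib)

lemma sum_mv: "(sum f S) *v x = (\<Sum>k\<in>S. f k *v x)"
  by (induction S rule: infinite_finite_induct) (simp_all add: matrix_vector_mult_add_rdistrib)

lemma transpose_sum: "transpose (sum f S) = (\<Sum>k\<in>S. transpose (f k))"
  by (simp add: transpose_def vec_eq_iff sum_component)

lemma outer_mv: "outer a b *v x = (b \<bullet> x) *\<^sub>R a"
  by (simp add: outer_def vec_eq_iff matrix_vector_mult_def inner_vec_def sum_distrib_left mult.commute mult.left_commute)

lemma transpose_outer: "transpose (outer a b) = outer b a"
  by (simp add: outer_def transpose_def vec_eq_iff)

lemma entry_diff: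
  fixes M :: "real^'n \<Rightarrow> real^'b^'a"
  assumes "M differentiable (at u)"
  shows "(\<lambda>v. M v $ a $ b) differentiable (at u)"
proof -
  have bl: "bounded_linear (\<lambda>A::real^'b^'a. A $ a $ b)"
    using bounded_linear_compose[OF bounded_linear_vec_nth bounded_linear_vec_nth] by blast
  from assms obtain D where "(M has_derivative D) (at u)" unfolding differentiable_def by blast
  from bounded_linear.has_derivative[OF bl this] show ?thesis unfolding differentiable_def by blast
qed

lemma vec_nth_diff:
  fixes b :: "real^'n \<Rightarrow> real^'a"
  assumes "b differentiable (at u)"
  shows "(\<lambda>v. b v $ a) differentiable (at u)"
proof -
  from assms obtain D where "(b has_derivative D) (at u)" unfolding differentiable_def by blast
  from bounded_linear.has_derivative[OF bounded_linear_vec_nth this] show ?thesis unfolding differentiable_def by blast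
qed

lemma prod_diff:
  fixes f :: "'i \<Rightarrow> real^'n \<Rightarrow> real"
  assumes "\<And>k. f k differentiable (at u)"
  shows "(\<lambda>v. \<Prod>k\<in>S. f k v) differentiable (at u)"
proof -
  from assms obtain D where "\<And>k. (f k has_derivative D k) (at u)" unfolding differentiable_def by metis
  from has_derivative_prod[of S f D, OF this] show ?thesis unfolding differentiable_def by blast
qed

lemma det_diff:
  fixes M :: "real^'n \<Rightarrow> real^'m^'m"
  assumes "\<And>a b. (\<lambda>v. M v $ a $ b) differentiable (at u)"
  shows "(\<lambda>v. det (M v)) differentiable (at u)"
  unfolding det_def
  by (intro differentiable_sum differentiable_mult differentiable_const prod_diff ballI assms
        finite_permutations; simp)

lemma vec_sum_axis: "(\<Sum>k\<in>UNIV. (x::real^'a) $ k *\<^sub>R axis k 1) = x"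
  by (auto simp: vec_eq_iff sum_component axis_def if_distrib sum.delta cong: if_cong)

lemma matrix_inv_left: "invertible A \<Longrightarrow> matrix_inv A ** A = mat 1"
  and matrix_inv_right: "invertible A \<Longrightarrow> A ** matrix_inv A = mat 1"
  unfolding invertible_def matrix_inv_def by (metis (mono_tags, lifting) someI_ex)+

lemma inv_mv_diff:
  fixes A :: "real^'n \<Rightarrow> real^'m^'m" and b :: "real^'n \<Rightarrow> real^'m"
  assumes "A differentiable (at u)" "b differentiable (at u)" "open U" "u \<in> U"
    "\<And>v. v \<in> U \<Longrightarrow> invertible (A v)"
  shows "(\<lambda>v. matrix_inv (A v) *v b v) differentiable (at u)"
proof -
  define C where "C v = (\<Sum>k\<in>UNIV. (det (\<chi> i j. if j=k then b v$i else A v$i$j) / det (A v)) *\<^sub>R axis k (1::real))" for v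
  have eq: "C v = matrix_inv (A v) *v b v" if "v \<in> U" for v
  proof -
    have inv: "invertible (A v)" using assms(5) that by blast
    then have d: "det (A v) \<noteq> 0" by (simp add: invertible_det_nz)
    have "A v *v (matrix_inv (A v) *v b v) = b v"
      using matrix_inv_right[OF inv] by (simp add: matrix_vector_mul_assoc)
    then have "matrix_inv (A v) *v b v = (\<chi> k. det(\<chi> i j. if j=k then b v$i else A v$i$j) / det (A v))"
      using cramer[OF d] by blast
    then show ?thesis unfolding C_def
      by (metis (no_types, lifting) sum.cong vec_lambda_beta vec_sum_axis)
  qed
  have "C differentiable (at u)"
  proof -
    have "(\<lambda>v. det (\<chi> i j. if j=k then b v$i else A v$i$j)) differentiable (at u)" for k
      apply (rule det_diff)
      subgoal for a c by (cases "c = k") (simp_all add: vec_nth_diff[OF assms(2)] entry_diff[OF assms(1)])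
      done
    moreover have "(\<lambda>v. det (A v)) differentiable (at u)"
      using det_diff entry_diff[OF assms(1)] by blast
    moreover have "det (A u) \<noteq> 0" using assms(4,5) invertible_det_nz by blast
    ultimately show ?thesis unfolding C_def
      by (intro differentiable_sum ballI differentiable_scaleR differentiable_divide differentiable_const finite_UNIV) auto
  qed
  then have "(C has_derivative frechet_derivative C (at u)) (at u)"
    using frechet_derivative_works by blast
  from has_derivative_transform_within_open[OF this assms(3,4) eq] show ?thesis
    unfolding differentiable_def by blast
qed

lemma alg:
  fixes Om P :: "real^'m^'m" and Ozx :: "real^'m^'l" and Oxz :: "real^'l^'m"
    and xi :: "'n::finite \<Rightarrow> real^'m" and ze :: "'n \<Rightarrow> real^'l" and b :: "'n \<Rightarrow> real"
    and xi' s dw :: "real^'m" and ze' :: "real^'l"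
  assumes PO: "P ** Om = mat 1"
    and s1: "Oxz + transpose Ozx = (\<Sum>k\<in>UNIV. outer (xi k) (ze k))"
    and s2: "Om + transpose Om = (\<Sum>k\<in>UNIV. outer (xi k) (xi k))"
    and sdef: "s = xi' + (\<Sum>k\<in>UNIV - {i}. b k *\<^sub>R xi k)"
    and dwdef: "dw = P *v (xi' - outer (xi i) s *v (P *v xi i))"
  shows "(ze' + (\<Sum>k\<in>UNIV - {i}. b k *\<^sub>R ze k)) - s v* (P ** Oxz) =
     (ze' - (Ozx *v dw + outer (ze i) s *v (P *v xi i)))
     + (\<Sum>k\<in>UNIV - {i}. (b k - s \<bullet> (P *v xi k)) *\<^sub>R (ze k - Ozx *v (P *v xi k)))"
proof -
  define w where "w k = P *v xi k" for k
  define t where "t = transpose P *v s"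
  have st: "s \<bullet> w k = t \<bullet> xi k" for k
    unfolding w_def t_def
    by (metis dot_lmul_matrix transpose_transpose vector_transpose_matrix)
  have sumA: "(\<Sum>k\<in>UNIV. (s \<bullet> w k) *\<^sub>R ze k) = transpose Oxz *v t + Ozx *v t"
  proof -
    have "(\<Sum>k\<in>UNIV. (s \<bullet> w k) *\<^sub>R ze k) = (\<Sum>k\<in>UNIV. outer (ze k) (xi k) *v t)"
      by (simp add: st outer_mv inner_commute)
    also have "\<dots> = transpose (\<Sum>k\<in>UNIV. outer (xi k) (ze k)) *v t"
      by (simp add: sum_mv transpose_sum transpose_outer)
    also have "\<dots> = transpose Oxz *v t + Ozx *v t"
      by (simp flip: s1 add: transpose_sum[of _ "{_,_}", simplified] matrix_vector_mult_add_rdistrib vector_matrix_mult_add_rdistrib vector_transpose_matrix)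
    finally show ?thesis .
  qed
  have sumB: "(\<Sum>k\<in>UNIV. (s \<bullet> w k) *\<^sub>R w k) = t + P *v s"
  proof -
    have "(\<Sum>k\<in>UNIV. (s \<bullet> w k) *\<^sub>R w k) = P *v (\<Sum>k\<in>UNIV. outer (xi k) (xi k) *v t)"
      using st by (simp add: outer_mv inner_commute mv_sum w_def matrix_vector_mult_scaleR)
    also have "\<dots> = P *v ((Om + transpose Om) *v t)"
      by (simp add: sum_mv s2)
    also have "\<dots> = P *v (Om *v t) + P *v (transpose Om *v t)"
      by (simp add: matrix_vector_mult_add_rdistrib matrix_vector_right_distrib)
    also have "P *v (Om *v t) = t"
      by (simp add: matrix_vector_mul_assoc PO)
    also have "transpose Om *v t = s"
      unfolding t_def
      by (simp add: matrix_vector_mul_assoc vector_matrix_mul_assoc PO)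
    finally show ?thesis .
  qed
  have E1: "(\<Sum>k\<in>UNIV - {i}. (b k - s \<bullet> w k) *\<^sub>R (ze k - Ozx *v w k)) =
     (\<Sum>k\<in>UNIV - {i}. b k *\<^sub>R ze k) - Ozx *v (P *v (s - xi'))
     - (\<Sum>k\<in>UNIV - {i}. (s \<bullet> w k) *\<^sub>R ze k) + Ozx *v (\<Sum>k\<in>UNIV - {i}. (s \<bullet> w k) *\<^sub>R w k)"
  proof -
    have "s - xi' = (\<Sum>k\<in>UNIV - {i}. b k *\<^sub>R xi k)" using sdef by simp
    then have "Ozx *v (P *v (s - xi')) = (\<Sum>k\<in>UNIV - {i}. b k *\<^sub>R (Ozx *v w k))"
      by (simp add: mv_sum w_def matrix_vector_mult_scaleR)
    moreover have "Ozx *v (\<Sum>k\<in>UNIV - {i}. (s \<bullet> w k) *\<^sub>R w k) = (\<Sum>k\<in>UNIV - {i}. (s \<bullet> w k) *\<^sub>R (Ozx *v w k))"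
      by (simp add: mv_sum matrix_vector_mult_scaleR)
    ultimately show ?thesis
      by (simp add: scaleR_diff_left scaleR_diff_right sum.distrib sum_subtractf algebra_simps)
  qed
  have rem: "(\<Sum>k\<in>UNIV. f k) = f i + (\<Sum>k\<in>UNIV - {i}. f k)" for f :: "'n \<Rightarrow> real^'l"
    by (simp add: sum.remove)
  have remm: "(\<Sum>k\<in>UNIV. f k) = f i + (\<Sum>k\<in>UNIV - {i}. f k)" for f :: "'n \<Rightarrow> real^'m"
    by (simp add: sum.remove)
  have A2: "(\<Sum>k\<in>UNIV - {i}. (s \<bullet> w k) *\<^sub>R ze k) = transpose Oxz *v t + Ozx *v t - (s \<bullet> w i) *\<^sub>R ze i"
    using sumA rem[of "\<lambda>k. (s \<bullet> w k) *\<^sub>R ze k"] by (simp add: eq_diff_eq add.commute)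
  have B2: "(\<Sum>k\<in>UNIV - {i}. (s \<bullet> w k) *\<^sub>R w k) = t + P *v s - (s \<bullet> w i) *\<^sub>R w i"
    using sumB remm[of "\<lambda>k. (s \<bullet> w k) *\<^sub>R w k"] by (simp add: eq_diff_eq add.commute)
  have dw2: "Ozx *v dw = Ozx *v (P *v xi') - (s \<bullet> w i) *\<^sub>R (Ozx *v w i)"
    unfolding dwdef by (simp add: outer_mv w_def matrix_vector_mult_diff_distrib matrix_vector_mult_scaleR)
  have lhs: "s v* (P ** Oxz) = transpose Oxz *v t"
    unfolding t_def
    by (metis matrix_transpose_mul matrix_vector_mul_assoc transpose_transpose vector_transpose_matrix)
  have "(\<Sum>k\<in>UNIV - {i}. (b k - s \<bullet> (P *v xi k)) *\<^sub>R (ze k - Ozx *v (P *v xi k)))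
      = (\<Sum>k\<in>UNIV - {i}. (b k - s \<bullet> w k) *\<^sub>R (ze k - Ozx *v w k))" by (simp add: w_def)
  also note E1
  finally show ?thesis
    unfolding lhs A2 B2 dw2
    by (simp add: outer_mv w_def matrix_vector_mult_diff_distrib matrix_vector_right_distrib
        matrix_vector_mult_scaleR algebra_simps)
qed

theorem lemma3:
  fixes U :: "(real^'n) set"
    and \<beta> :: "'n \<Rightarrow> 'n \<Rightarrow> real^'n \<Rightarrow> real"
    and \<xi> :: "'n \<Rightarrow> real^'n \<Rightarrow> real^'m"
    and \<zeta> :: "'n \<Rightarrow> real^'n \<Rightarrow> real^'l"
    and \<Omega>xx :: "real^'n \<Rightarrow> real^'m^'m"
    and \<Omega>xz :: "real^'n \<Rightarrow> real^'l^'m"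
    and \<Omega>zx :: "real^'n \<Rightarrow> real^'m^'l"
  assumes U_open: "open U"
    and sm_beta: "\<And>i j. i \<noteq> j \<Longrightarrow> smooth_on U (\<beta> i j)"
    and sm_xi: "\<And>i. smooth_on U (\<xi> i)"
    and sm_zeta: "\<And>i. smooth_on U (\<zeta> i)"
    and sm_Oxx: "smooth_on U \<Omega>xx"
    and sm_Oxz: "smooth_on U \<Omega>xz"
    and sm_Ozx: "smooth_on U \<Omega>zx"
    and lame1: "\<And>i j k u. \<lbrakk>i \<noteq> j; j \<noteq> k; i \<noteq> k; u \<in> U\<rbrakk> \<Longrightarrow>
                  pd (\<beta> i j) k u = \<beta> i k u * \<beta> k j u"
    and lame2: "\<And>i j u. \<lbrakk>i \<noteq> j; u \<in> U\<rbrakk> \<Longrightarrow>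
                  pd (\<beta> i j) i u + pd (\<beta> j i) j u
                  + (\<Sum>k\<in>UNIV - {i, j}. \<beta> k i u * \<beta> k j u) = 0"
    and xi_eq: "\<And>i j u. \<lbrakk>i \<noteq> j; u \<in> U\<rbrakk> \<Longrightarrow> pd (\<xi> j) i u = \<beta> j i u *\<^sub>R \<xi> i u"
    and zeta_eq: "\<And>i j u. \<lbrakk>i \<noteq> j; u \<in> U\<rbrakk> \<Longrightarrow> pd (\<zeta> j) i u = \<beta> j i u *\<^sub>R \<zeta> i u"
    and dOxx: "\<And>i u. u \<in> U \<Longrightarrow> pd \<Omega>xx i u = outer (\<xi> i u) (starv \<beta> \<xi> i u)"
    and dOxz: "\<And>i u. u \<in> U \<Longrightarrow> pd \<Omega>xz i u = outer (\<xi> i u) (starv \<beta> \<zeta> i u)"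
    and dOzx: "\<And>i u. u \<in> U \<Longrightarrow> pd \<Omega>zx i u = outer (\<zeta> i u) (starv \<beta> \<xi> i u)"
    and inv: "\<And>u. u \<in> U \<Longrightarrow> invertible (\<Omega>xx u)"
    and sym1: "\<And>u. u \<in> U \<Longrightarrow> \<Omega>xz u + transpose (\<Omega>zx u) = (\<Sum>k\<in>UNIV. outer (\<xi> k u) (\<zeta> k u))"
    and sym2: "\<And>u. u \<in> U \<Longrightarrow> \<Omega>xx u + transpose (\<Omega>xx u) = (\<Sum>k\<in>UNIV. outer (\<xi> k u) (\<xi> k u))"
  defines "h\<beta> \<equiv> \<lambda>i j u. \<beta> i j u - starv \<beta> \<xi> j u \<bullet> (matrix_inv (\<Omega>xx u) *v \<xi> i u)"
    and "h\<zeta> \<equiv> \<lambda>i u. \<zeta> i u - \<Omega>zx u *v (matrix_inv (\<Omega>xx u) *v \<xi> i u)"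
    and "h\<zeta>s \<equiv> \<lambda>i u. starv \<beta> \<zeta> i u - starv \<beta> \<xi> i u v* (matrix_inv (\<Omega>xx u) ** \<Omega>xz u)"
  shows "\<forall>i. \<forall>u\<in>U. h\<zeta>s i u = pd (h\<zeta> i) i u + (\<Sum>k\<in>UNIV - {i}. h\<beta> k i u *\<^sub>R h\<zeta> k u)"
proof (intro allI ballI)
  fix i :: 'n and u assume uU: "u \<in> U"
  define e where "e = axis i (1::real)"
  define P where "P = matrix_inv (\<Omega>xx u)"
  define s where "s = starv \<beta> \<xi> i u"
  define w where "w v = matrix_inv (\<Omega>xx v) *v \<xi> i v" for v
  have hd: "\<And>f. smooth_on U f \<Longrightarrow> (f has_derivative frechet_derivative f (at u)) (at u)"
    using smooth_diff[OF _ U_open uU] frechet_derivative_works by blast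
  have dxi: "(\<xi> i has_derivative frechet_derivative (\<xi> i) (at u)) (at u)" using hd sm_xi by blast
  have dze: "(\<zeta> i has_derivative frechet_derivative (\<zeta> i) (at u)) (at u)" using hd sm_zeta by blast
  have dOm: "(\<Omega>xx has_derivative frechet_derivative \<Omega>xx (at u)) (at u)" using hd sm_Oxx by blast
  have dOzx': "(\<Omega>zx has_derivative frechet_derivative \<Omega>zx (at u)) (at u)" using hd sm_Ozx by blast
  have "w differentiable (at u)"
    unfolding w_def
    by (rule inv_mv_diff[OF _ _ U_open uU inv]) (use smooth_diff[OF _ U_open uU] sm_Oxx sm_xi in auto)
  then have dw: "(w has_derivative frechet_derivative w (at u)) (at u)"
    using frechet_derivative_works by blast
  have PO: "P ** \<Omega>xx u = mat 1" unfolding P_def using matrix_inv_left[OF inv[OF uU]] .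
  have pOm: "pd \<Omega>xx i u = frechet_derivative \<Omega>xx (at u) e" using pd_eq[OF dOm] e_def by simp
  have pxi: "pd (\<xi> i) i u = \<Omega>xx u *v frechet_derivative w (at u) e + frechet_derivative \<Omega>xx (at u) e *v w u"
  proof -
    have "((\<lambda>v. \<Omega>xx v *v w v) has_derivative
       (\<lambda>h. \<Omega>xx u *v frechet_derivative w (at u) h + frechet_derivative \<Omega>xx (at u) h *v w u)) (at u)"
      using bounded_bilinear.FDERIV[OF bilinear_mv dOm dw] by simp
    moreover have "\<Omega>xx v *v w v = \<xi> i v" if "v \<in> U" for v
      unfolding w_def using matrix_inv_right[OF inv[OF that]] by (simp add: matrix_vector_mul_assoc)
    ultimately have "(\<xi> i has_derivative
       (\<lambda>h. \<Omega>xx u *v frechet_derivative w (at u) h + frechet_derivative \<Omega>xx (at u) h *v w u)) (at u)"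
      using has_derivative_transform_within_open[OF _ U_open uU] by blast
    from pd_eq[OF this] show ?thesis unfolding e_def .
  qed
  have Dw: "frechet_derivative w (at u) e = P *v (pd (\<xi> i) i u - outer (\<xi> i u) s *v (P *v \<xi> i u))"
    using pxi pOm dOxx[OF uU] unfolding s_def
    by (simp add: matrix_vector_mul_assoc PO w_def P_def flip: P_def)
  have phz: "pd (h\<zeta> i) i u = pd (\<zeta> i) i u - (\<Omega>zx u *v frechet_derivative w (at u) e + outer (\<zeta> i u) s *v w u)"
  proof -
    have eqf: "h\<zeta> i = (\<lambda>v. \<zeta> i v - \<Omega>zx v *v w v)" unfolding h\<zeta>_def w_def by simp
    have "(h\<zeta> i has_derivative (\<lambda>h. frechet_derivative (\<zeta> i) (at u) h -
        (\<Omega>zx u *v frechet_derivative w (at u) h + frechet_derivative \<Omega>zx (at u) h *v w u))) (at u)"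
      unfolding eqf
      by (intro has_derivative_diff dze) (use bounded_bilinear.FDERIV[OF bilinear_mv dOzx' dw] in simp)
    from pd_eq[OF this] have "pd (h\<zeta> i) i u = frechet_derivative (\<zeta> i) (at u) e -
        (\<Omega>zx u *v frechet_derivative w (at u) e + frechet_derivative \<Omega>zx (at u) e *v w u)"
      unfolding e_def .
    moreover have "pd (\<zeta> i) i u = frechet_derivative (\<zeta> i) (at u) e" using pd_eq[OF dze] e_def by simp
    moreover have "pd \<Omega>zx i u = frechet_derivative \<Omega>zx (at u) e" using pd_eq[OF dOzx'] e_def by simp
    ultimately show ?thesis using dOzx[OF uU] s_def by simp
  qed
  have al: "(pd (\<zeta> i) i u + (\<Sum>k\<in>UNIV - {i}. \<beta> k i u *\<^sub>R \<zeta> k u)) - s v* (P ** \<Omega>xz u) =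
     (pd (\<zeta> i) i u - (\<Omega>zx u *v frechet_derivative w (at u) e + outer (\<zeta> i u) s *v (P *v \<xi> i u)))
     + (\<Sum>k\<in>UNIV - {i}. (\<beta> k i u - s \<bullet> (P *v \<xi> k u)) *\<^sub>R (\<zeta> k u - \<Omega>zx u *v (P *v \<xi> k u)))"
    by (rule alg[OF PO sym1[OF uU] sym2[OF uU]]) (simp_all add: s_def starv_def Dw)
  show "h\<zeta>s i u = pd (h\<zeta> i) i u + (\<Sum>k\<in>UNIV - {i}. h\<beta> k i u *\<^sub>R h\<zeta> k u)"
    unfolding phz h\<zeta>s_def h\<beta>_def
    using al by (simp add: h\<zeta>_def starv_def[of _ \<zeta>] w_def flip: P_def s_def)
qed

end
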